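(* For a pair of adapted processes $V=(V_t)_{t\in\mathbb{T}}$, $S=(S_t)_{t\in\mathbb{T}\cup\{T\}}$, properties (i)–(iii) hold jointly if and only if properties (i')–(iii') hold jointly, where: (i) $0<S_t\le1$ on $D_t$ and $S_t=0$ on $D_t^c$ for all $t\in\mathbb{T}$, and $V_t=G_t$ on $\{t\ge T_e\}$; (ii) given $S$, $V$ is the smallest adapted process which dominates $G$ and renders $(S_{t\wedge T_e}V_{t\wedge T_e})_{t\in\mathbb{T}}$ a supermartingale; (iii) given $V$, $S$ is the smallest nonnegative supermartingale on $\mathbb{T}\cup\{T\}$ satisfying $S_t=1$ on $D_t\cap\{V_t=G_t\}$ for all $t\in\mathbb{T}$, and $S_\infty=1_{\{\sigma=\infty\}}$ if $T=\infty$; (i') $S_t>0$ on $D_t$ for all $t\in\mathbb{T}$ and $V_t=G_t$ on $\{t\ge T_e\}$; (ii') $(S_{t\wedge T_e}V_{t\wedge T_e})_{t\in\mathbb{T}}$ is the Snell envelope of $(S_{t\wedge T_e}G_{t\wedge T_e})_{t\in\mathbb{T}}$; (iii') $S$ is the Snell envelope on $\mathbb{T}\cup\{T\}$ of the process $1_{\{t<\infty\}\cap\{V_t=G_t\}\cap D_t}+1_{\{t=\sigma=\infty\}}$.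
   Context: Let $T\in\mathbb{N}\cup\{\infty\}$, $\mathbb{T}=\{0,\dots,T\}$ if $T<\infty$ and $\mathbb{T}=\{0,1,2,\dots\}$ if $T=\infty$ (supermartingale properties and Snell envelopes are on $\mathbb{T}$ unless stated otherwise; the Snell envelope of a process is the smallest supermartingale dominating it). Let $(\Omega,\mathcal{F},P)$ be a probability space with filtration $(\mathcal{F}_t)_{t\le T}$, $\mathcal{F}_0$ trivial. Let $\sigma$ be a stopping time with values in $\{0,1,\dots\}\cup\{\infty\}$, $P(\sigma>0)=1$; $D_t=\{t<\sigma\}$, $D_\infty=\{\sigma=\infty\}$. Let $G=(G_t)_{t\in\mathbb{T}\cup\{T\}}$ be adapted, with $G_t=\Delta$ on $D_t^c$ ($\Delta$ auxiliary, $0\cdot\Delta=0$), $E[\sup_{t\le T}|G_t|1_{D_t}]<\infty$, and $G_\infty=\limsup_{t\to\infty}G_t$ if $T=\infty$. Effective horizon $T_e=T\wedge\inf\{0\le t<T:P(D_{t+1}\mid\mathcal{F}_t)=0\}$, $\inf\emptyset=\infty$. *)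

theory Defs
  imports "HOL-Probability.Probability" "HOL-Library.Extended_Nat"
begin

text \<open>Discrete time is modelled by enat: finite times are enat t, the time
  infinity is the value infinity.  A process is a map enat => 'a => real.\<close>

text \<open>Index sets: TT T is the set of finite t with t <= T (the set called \<T> in the paper);
  TTbar T is \<T> together with T, i.e. all t <= T (including infinity if T = infinity).\<close>
definition TT :: "enat \<Rightarrow> enat set" where
  "TT T = {t. t \<le> T \<and> t \<noteq> \<infinity>}"

definition TTbar :: "enat \<Rightarrow> enat set" where
  "TTbar T = {t. t \<le> T}"

definition filtration_on :: "'a measure \<Rightarrow> (enat \<Rightarrow> 'a measure) \<Rightarrow> enat set \<Rightarrow> bool" where
  "filtration_on M F I \<longleftrightarrow>
     (\<forall>t\<in>I. subalgebra M (F t)) \<and>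
     (\<forall>s\<in>I. \<forall>t\<in>I. s \<le> t \<longrightarrow> sets (F s) \<subseteq> sets (F t))"

definition adapted_on :: "(enat \<Rightarrow> 'a measure) \<Rightarrow> enat set \<Rightarrow> (enat \<Rightarrow> 'a \<Rightarrow> real) \<Rightarrow> bool" where
  "adapted_on F I X \<longleftrightarrow> (\<forall>t\<in>I. X t \<in> borel_measurable (F t))"

definition supermartingale_on ::
  "'a measure \<Rightarrow> (enat \<Rightarrow> 'a measure) \<Rightarrow> enat set \<Rightarrow> (enat \<Rightarrow> 'a \<Rightarrow> real) \<Rightarrow> bool" where
  "supermartingale_on M F I X \<longleftrightarrow>
     adapted_on F I X \<and> (\<forall>t\<in>I. integrable M (X t)) \<and>
     (\<forall>s\<in>I. \<forall>t\<in>I. s \<le> t \<longrightarrow> (AE \<omega> in M. real_cond_exp M (F s) (X t) \<omega> \<le> X s \<omega>))"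

definition snell_envelope_on ::
  "'a measure \<Rightarrow> (enat \<Rightarrow> 'a measure) \<Rightarrow> enat set \<Rightarrow> (enat \<Rightarrow> 'a \<Rightarrow> real) \<Rightarrow> (enat \<Rightarrow> 'a \<Rightarrow> real) \<Rightarrow> bool" where
  "snell_envelope_on M F I X Y \<longleftrightarrow>
     supermartingale_on M F I Y \<and> (\<forall>t\<in>I. AE \<omega> in M. X t \<omega> \<le> Y t \<omega>) \<and>
     (\<forall>Z. supermartingale_on M F I Z \<and> (\<forall>t\<in>I. AE \<omega> in M. X t \<omega> \<le> Z t \<omega>)
          \<longrightarrow> (\<forall>t\<in>I. AE \<omega> in M. Y t \<omega> \<le> Z t \<omega>))"

definition Dset :: "'a measure \<Rightarrow> ('a \<Rightarrow> enat) \<Rightarrow> enat \<Rightarrow> 'a set" where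
  "Dset M \<sigma> t = {\<omega> \<in> space M. if t = \<infinity> then \<sigma> \<omega> = \<infinity> else t < \<sigma> \<omega>}"

definition eff_horizon ::
  "'a measure \<Rightarrow> (enat \<Rightarrow> 'a measure) \<Rightarrow> ('a \<Rightarrow> enat) \<Rightarrow> enat \<Rightarrow> 'a \<Rightarrow> enat" where
  "eff_horizon M F \<sigma> T \<omega> = min T
     (INF t \<in> {t::nat. enat t < T \<and>
                 real_cond_exp M (F (enat t)) (indicator (Dset M \<sigma> (enat (Suc t)))) \<omega> = 0}. enat t)"

text \<open>Product of a real process S with a Delta-valued process X, where X is only
  meaningful on D_t and equals the cemetery Delta off D_t; the convention 0 * Delta = 0
  is implemented by setting the product to 0 off D_t.\<close>
definition kprod ::
  "'a measure \<Rightarrow> ('a \<Rightarrow> enat) \<Rightarrow> (enat \<Rightarrow> 'a \<Rightarrow> real) \<Rightarrow> (enat \<Rightarrow> 'a \<Rightarrow> real) \<Rightarrow> enat \<Rightarrow> 'a \<Rightarrow> real" where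
  "kprod M \<sigma> S X t \<omega> = (if \<omega> \<in> Dset M \<sigma> t then S t \<omega> * X t \<omega> else 0)"

definition stopped :: "('a \<Rightarrow> enat) \<Rightarrow> (enat \<Rightarrow> 'a \<Rightarrow> real) \<Rightarrow> enat \<Rightarrow> 'a \<Rightarrow> real" where
  "stopped \<tau> X t \<omega> = X (min t (\<tau> \<omega>)) \<omega>"

end

theory Submission
  imports Defs
begin

lemma enat_less_INF_iff:
  "enat k < (INF n\<in>A. enat n) \<longleftrightarrow> (\<forall>n\<in>A. k < n)"
proof
  assume "enat k < (INF n\<in>A. enat n)"
  then show "\<forall>n\<in>A. k < n"
    by (metis INF_lower enat_ord_simps(2) order_less_le_trans)
next
  assume "\<forall>n\<in>A. k < n"
  then have "enat (Suc k) \<le> (INF n\<in>A. enat n)"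
    by (auto intro!: INF_greatest)
  then show "enat k < (INF n\<in>A. enat n)"
    by (metis enat_ord_simps(2) lessI order_less_le_trans)
qed


lemma arith_minmax:
  fixes a v g z :: real
  assumes "0 < a"
  shows "a * min v (max g (z / a)) = min (a * v) (max (a * g) z)"
proof -
  have e: "a * (z / a) = z" using assms by simp
  have "a * min v (max g (z / a)) = min (a * v) (a * max g (z / a))"
    using assms by (simp add: min_def mult_le_cancel_left_pos)
  also have "a * max g (z / a) = max (a * g) z"
    using assms e by (simp add: max_def mult_le_cancel_left_pos) (metis e mult_le_cancel_left_pos)
  finally show ?thesis .
qed

lemma arith_le:
  fixes a v g z :: real
  assumes "0 < a" "v \<le> max g (z / a)"
  shows "a * v \<le> max (a * g) z"
proof -
  have "a * v \<le> a * max g (z / a)" using assms by (simp add: mult_left_mono)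
  also have "a * max g (z / a) = max (a * g) z"
    using assms by (simp add: max_def mult_le_cancel_left_pos) (metis assms(1) mult_le_cancel_left_pos nonzero_mult_div_cancel_left order_less_irrefl times_divide_eq_right)
  finally show ?thesis .
qed

locale L6 =
  fixes M :: "'a measure" and F :: "enat \<Rightarrow> 'a measure" and T :: enat and \<sigma> :: "'a \<Rightarrow> enat"
  assumes prob: "prob_space M"
    and filt: "filtration_on M F (TTbar T)"
    and sigma_stop: "\<forall>t\<in>TTbar T. {\<omega> \<in> space M. \<sigma> \<omega> \<le> t} \<in> sets (F t)"
begin

sublocale P: prob_space M by (rule prob)

lemma TT_sub: "TT T \<subseteq> TTbar T"
  unfolding TT_def TTbar_def by auto

lemma subalg: "t \<in> TTbar T \<Longrightarrow> subalgebra M (F t)"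
  using filt unfolding filtration_on_def by auto

lemma sfs: "t \<in> TTbar T \<Longrightarrow> sigma_finite_subalgebra M (F t)"
  by (rule finite_measure_subalgebra_is_sigma_finite)
     (simp add: finite_measure_subalgebra_def finite_measure_subalgebra_axioms_def subalg P.finite_measure_axioms)

lemma space_F: "t \<in> TTbar T \<Longrightarrow> space (F t) = space M"
  using subalg unfolding subalgebra_def by auto

lemma meas_mono: "s \<in> TTbar T \<Longrightarrow> t \<in> TTbar T \<Longrightarrow> s \<le> t \<Longrightarrow> f \<in> borel_measurable (F s) \<Longrightarrow> f \<in> borel_measurable (F t)"
  apply (rule borel_measurable_subalgebra[of "F s"])
  using filt space_F unfolding filtration_on_def by auto

lemma meas_M: "t \<in> TTbar T \<Longrightarrow> f \<in> borel_measurable (F t) \<Longrightarrow> f \<in> borel_measurable M"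
  using measurable_from_subalg subalg by blast

lemma sets_M: "t \<in> TTbar T \<Longrightarrow> A \<in> sets (F t) \<Longrightarrow> A \<in> sets M"
  using subalg unfolding subalgebra_def by auto

lemma D_anti: "s \<le> t \<Longrightarrow> Dset M \<sigma> t \<subseteq> Dset M \<sigma> s"
  unfolding Dset_def by (auto split: if_splits dest: order.strict_trans1)

lemma D_sets: assumes t: "t \<in> TTbar T" shows "Dset M \<sigma> t \<in> sets (F t)"
proof (cases "t = \<infinity>")
  case True
  have eq: "Dset M \<sigma> t = space (F t) - (\<Union>n. {\<omega> \<in> space M. \<sigma> \<omega> \<le> enat n})"
    using True t space_F by (auto simp: Dset_def) (metis not_infinity_eq order_refl)
  have hn: "{\<omega> \<in> space M. \<sigma> \<omega> \<le> enat n} \<in> sets (F t)" for n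
  proof -
    have "enat n \<in> TTbar T" using True t by (simp add: TTbar_def)
    then have "{\<omega> \<in> space M. \<sigma> \<omega> \<le> enat n} \<in> sets (F (enat n))" using sigma_stop by blast
    moreover have "sets (F (enat n)) \<subseteq> sets (F t)"
      using filt \<open>enat n \<in> TTbar T\<close> t True unfolding filtration_on_def by simp
    ultimately show ?thesis by blast
  qed
  have "(\<Union>n. {\<omega> \<in> space M. \<sigma> \<omega> \<le> enat n}) \<in> sets (F t)"
    by (rule sets.countable_UN'') (simp_all add: hn)
  then have "space (F t) - (\<Union>n. {\<omega> \<in> space M. \<sigma> \<omega> \<le> enat n}) \<in> sets (F t)"
    by (rule sets.compl_sets)
  then show ?thesis using eq by simp
next
  case False
  have "Dset M \<sigma> t = space (F t) - {\<omega> \<in> space M. \<sigma> \<omega> \<le> t}"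
    using False t space_F by (auto simp: Dset_def)
  also have "\<dots> \<in> sets (F t)" using sigma_stop t by auto
  finally show ?thesis .
qed

lemma Te_sets:
  assumes t: "t \<in> TT T"
  shows "{\<omega> \<in> space M. t < eff_horizon M F \<sigma> T \<omega>} \<in> sets (F t)"
proof -
  obtain k where k: "t = enat k" using t by (cases t) (auto simp: TT_def)
  have tT: "t \<in> TTbar T" using t TT_sub by auto
  let ?ce = "\<lambda>n. real_cond_exp M (F (enat n)) (indicator (Dset M \<sigma> (enat (Suc n))))"
  have pw: "t < eff_horizon M F \<sigma> T \<omega> \<longleftrightarrow> t < T \<and> (\<forall>n\<in>{..k}. ?ce n \<omega> \<noteq> 0)" for \<omega>
  proof -
    have "t < eff_horizon M F \<sigma> T \<omega> \<longleftrightarrow> t < T \<and> (\<forall>n. enat n < T \<and> ?ce n \<omega> = 0 \<longrightarrow> k < n)"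
      by (simp add: eff_horizon_def enat_less_INF_iff k)
    also have "\<dots> \<longleftrightarrow> t < T \<and> (\<forall>n\<in>{..k}. ?ce n \<omega> \<noteq> 0)"
    proof (cases "t < T")
      case True
      have lt: "enat n < T" if "n \<le> k" for n
        using True k that by (metis enat_ord_simps(1) le_less_trans)
      have "(\<forall>n. enat n < T \<and> ?ce n \<omega> = 0 \<longrightarrow> k < n) \<longleftrightarrow> (\<forall>n\<in>{..k}. ?ce n \<omega> \<noteq> 0)"
      proof
        assume H: "\<forall>n. enat n < T \<and> ?ce n \<omega> = 0 \<longrightarrow> k < n"
        show "\<forall>n\<in>{..k}. ?ce n \<omega> \<noteq> 0"
        proof
          fix n assume "n \<in> {..k}"
          then have "n \<le> k" by simp
          then show "?ce n \<omega> \<noteq> 0" using H lt[of n] by (meson not_le)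
        qed
      next
        assume H: "\<forall>n\<in>{..k}. ?ce n \<omega> \<noteq> 0"
        show "\<forall>n. enat n < T \<and> ?ce n \<omega> = 0 \<longrightarrow> k < n"
        proof (intro allI impI)
          fix n assume "enat n < T \<and> ?ce n \<omega> = 0"
          then show "k < n" using H by (meson atMost_iff not_le)
        qed
      qed
      then show ?thesis using True by simp
    qed simp
    finally show ?thesis .
  qed
  have eq: "{\<omega> \<in> space M. t < eff_horizon M F \<sigma> T \<omega>} =
      {\<omega> \<in> space (F t). t < T \<and> (\<forall>n\<in>{..k}. ?ce n \<omega> \<noteq> 0)}"
    using space_F[OF tT] pw by simp
  have cem: "?ce n \<in> borel_measurable (F t)" if "n \<in> {..k}" for n
  proof -
    from that have nt: "enat n \<le> t" using k by simp
    then have "enat n \<in> TTbar T" using tT unfolding TTbar_def by (meson mem_Collect_eq order_trans)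
    then show "?ce n \<in> borel_measurable (F t)"
      using nt meas_mono[of "enat n" t] tT borel_measurable_cond_exp by blast
  qed
  have pn: "Measurable.pred (F t) (\<lambda>\<omega>. ?ce n \<omega> \<noteq> 0)" if "n \<in> {..k}" for n
  proof -
    have [measurable]: "?ce n \<in> borel_measurable (F t)" using cem that .
    show ?thesis by measurable
  qed
  have "Measurable.pred (F t) (\<lambda>\<omega>. \<forall>n\<in>{..k}. ?ce n \<omega> \<noteq> 0)"
    by (rule pred_intros_finite(3)[OF finite_atMost pn])
  then have "Measurable.pred (F t) (\<lambda>\<omega>. t < T \<and> (\<forall>n\<in>{..k}. ?ce n \<omega> \<noteq> 0))"
    by (cases "t < T") (simp_all add: pred_def)
  then show ?thesis unfolding eq pred_def .
qed


lemma ad_meas: "adapted_on F I X \<Longrightarrow> t \<in> I \<Longrightarrow> X t \<in> borel_measurable (F t)"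
  by (simp add: adapted_on_def)

lemma sup_meas: "supermartingale_on M F I X \<Longrightarrow> t \<in> I \<Longrightarrow> X t \<in> borel_measurable (F t)"
  by (simp add: supermartingale_on_def adapted_on_def)

lemma adapted_M: "adapted_on F I X \<Longrightarrow> I \<subseteq> TTbar T \<Longrightarrow> t \<in> I \<Longrightarrow> X t \<in> borel_measurable M"
  unfolding adapted_on_def using meas_M by blast

lemma min_super:
  assumes I: "I \<subseteq> TTbar T" and X: "supermartingale_on M F I X" and Y: "supermartingale_on M F I Y"
    and U: "adapted_on F I U" and eqU: "\<And>t. t \<in> I \<Longrightarrow> AE \<omega> in M. U t \<omega> = min (X t \<omega>) (Y t \<omega>)"
  shows "supermartingale_on M F I U"
proof -
  have XaM: "X t \<in> borel_measurable M" if "t \<in> I" for t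
    using X I that adapted_M unfolding supermartingale_on_def by blast
  have YaM: "Y t \<in> borel_measurable M" if "t \<in> I" for t
    using Y I that adapted_M unfolding supermartingale_on_def by blast
  have UaM: "U t \<in> borel_measurable M" if "t \<in> I" for t
    using U I that adapted_M by blast
  have Xi: "integrable M (X t)" if "t \<in> I" for t using X that unfolding supermartingale_on_def by blast
  have Yi: "integrable M (Y t)" if "t \<in> I" for t using Y that unfolding supermartingale_on_def by blast
  have mi: "integrable M (\<lambda>\<omega>. min (X t \<omega>) (Y t \<omega>))" if "t \<in> I" for t
    using Xi Yi that by auto
  have Ui: "integrable M (U t)" if "t \<in> I" for t
  proof -
    have "integrable M (U t) \<longleftrightarrow> integrable M (\<lambda>\<omega>. min (X t \<omega>) (Y t \<omega>))"
      by (rule integrable_cong_AE) (use UaM XaM YaM that eqU in auto)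
    then show ?thesis using mi that by simp
  qed
  have ce: "AE \<omega> in M. real_cond_exp M (F s) (U t) \<omega> \<le> U s \<omega>"
    if st: "s \<in> I" "t \<in> I" "s \<le> t" for s t
  proof -
    interpret S: sigma_finite_subalgebra M "F s" using sfs I st by blast
    have "AE \<omega> in M. real_cond_exp M (F s) (U t) \<omega> = real_cond_exp M (F s) (\<lambda>\<omega>. min (X t \<omega>) (Y t \<omega>)) \<omega>"
      by (rule S.real_cond_exp_cong) (use UaM XaM YaM st eqU in auto)
    moreover have "AE \<omega> in M. real_cond_exp M (F s) (\<lambda>\<omega>. min (X t \<omega>) (Y t \<omega>)) \<omega> \<le> real_cond_exp M (F s) (X t) \<omega>"
      by (rule S.real_cond_exp_mono) (use mi Xi st in auto)
    moreover have "AE \<omega> in M. real_cond_exp M (F s) (\<lambda>\<omega>. min (X t \<omega>) (Y t \<omega>)) \<omega> \<le> real_cond_exp M (F s) (Y t) \<omega>"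
      by (rule S.real_cond_exp_mono) (use mi Yi st in auto)
    moreover have "AE \<omega> in M. real_cond_exp M (F s) (X t) \<omega> \<le> X s \<omega>"
      using X st unfolding supermartingale_on_def by blast
    moreover have "AE \<omega> in M. real_cond_exp M (F s) (Y t) \<omega> \<le> Y s \<omega>"
      using Y st unfolding supermartingale_on_def by blast
    moreover have "AE \<omega> in M. U s \<omega> = min (X s \<omega>) (Y s \<omega>)" using eqU st by blast
    ultimately show ?thesis by eventually_elim linarith
  qed
  show ?thesis unfolding supermartingale_on_def using U Ui ce by blast
qed

lemma R_super: "supermartingale_on M F (TTbar T) (\<lambda>t \<omega>. indicator (Dset M \<sigma> t) \<omega>)"
proof -
  have ad: "adapted_on F (TTbar T) (\<lambda>t \<omega>. indicator (Dset M \<sigma> t) \<omega>)"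
    unfolding adapted_on_def using D_sets by (auto intro: borel_measurable_indicator)
  have DM: "Dset M \<sigma> t \<in> sets M" if "t \<in> TTbar T" for t using D_sets sets_M that by blast
  have int: "integrable M (indicator (Dset M \<sigma> t) :: 'a \<Rightarrow> real)" if "t \<in> TTbar T" for t
    using DM[OF that] by (intro integrable_real_indicator) (auto simp: P.emeasure_space_1 less_top[symmetric])
  have ce: "AE \<omega> in M. real_cond_exp M (F s) (indicator (Dset M \<sigma> t)) \<omega> \<le> indicator (Dset M \<sigma> s) \<omega>"
    if st: "s \<in> TTbar T" "t \<in> TTbar T" "s \<le> t" for s t
  proof -
    interpret S: sigma_finite_subalgebra M "F s" using sfs st by blast
    have "AE \<omega> in M. real_cond_exp M (F s) (indicator (Dset M \<sigma> t)) \<omega> \<le> real_cond_exp M (F s) (indicator (Dset M \<sigma> s)) \<omega>"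
      by (rule S.real_cond_exp_mono) (use int st D_anti[OF st(3)] in \<open>auto simp: indicator_def\<close>)
    moreover have "AE \<omega> in M. real_cond_exp M (F s) (indicator (Dset M \<sigma> s)) \<omega> = indicator (Dset M \<sigma> s) \<omega>"
      by (rule S.real_cond_exp_F_meas) (use int st D_sets in auto)
    ultimately show ?thesis by eventually_elim simp
  qed
  show ?thesis unfolding supermartingale_on_def using ad int ce by auto
qed


abbreviation Te where "Te \<equiv> eff_horizon M F \<sigma> T"

lemma countTT: "countable (TT T)" by (rule countableI_type)

lemma minTT: assumes t: "t \<in> TT T" shows "min t x \<in> TT T"
proof -
  have a: "min t x \<le> t" by simp
  have "min t x \<le> T" using t unfolding TT_def by (simp add: order.trans[OF a])
  moreover have "min t x \<noteq> \<infinity>"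
  proof
    assume "min t x = \<infinity>"
    then have "t = \<infinity>" using a by simp
    then show False using t by (simp add: TT_def)
  qed
  ultimately show ?thesis unfolding TT_def by simp
qed

lemma ii_bwd:
  assumes Spos: "\<forall>t\<in>TT T. AE \<omega> in M. \<omega> \<in> Dset M \<sigma> t \<longrightarrow> 0 < S t \<omega>"
    and VG: "\<forall>t\<in>TT T. AE \<omega> in M. Te \<omega> \<le> t \<and> \<omega> \<in> Dset M \<sigma> t \<longrightarrow> V t \<omega> = G t \<omega>"
    and sn: "snell_envelope_on M F (TT T) (stopped Te (kprod M \<sigma> S G)) (stopped Te (kprod M \<sigma> S V))"
  shows "(\<forall>t\<in>TT T. AE \<omega> in M. \<omega> \<in> Dset M \<sigma> t \<longrightarrow> G t \<omega> \<le> V t \<omega>) \<and>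
      supermartingale_on M F (TT T) (stopped Te (kprod M \<sigma> S V)) \<and>
      (\<forall>W. adapted_on F (TT T) W \<and>
           (\<forall>t\<in>TT T. AE \<omega> in M. \<omega> \<in> Dset M \<sigma> t \<longrightarrow> G t \<omega> \<le> W t \<omega>) \<and>
           supermartingale_on M F (TT T) (stopped Te (kprod M \<sigma> S W))
         \<longrightarrow> (\<forall>t\<in>TT T. AE \<omega> in M. \<omega> \<in> Dset M \<sigma> t \<longrightarrow> V t \<omega> \<le> W t \<omega>))"
proof (intro conjI allI impI ballI)
  fix t assume t: "t \<in> TT T"
  have dom: "AE \<omega> in M. stopped Te (kprod M \<sigma> S G) t \<omega> \<le> stopped Te (kprod M \<sigma> S V) t \<omega>"
    using sn t unfolding snell_envelope_on_def by blast
  show "AE \<omega> in M. \<omega> \<in> Dset M \<sigma> t \<longrightarrow> G t \<omega> \<le> V t \<omega>"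
    using dom Spos[rule_format, OF t] VG[rule_format, OF t]
  proof eventually_elim
    case (elim \<omega>)
    show ?case
    proof
      assume D: "\<omega> \<in> Dset M \<sigma> t"
      show "G t \<omega> \<le> V t \<omega>"
      proof (cases "Te \<omega> \<le> t")
        case True then show ?thesis using elim D by simp
      next
        case False then have "min t (Te \<omega>) = t" by simp
        then have "S t \<omega> * G t \<omega> \<le> S t \<omega> * V t \<omega>" using elim(1) D by (simp add: stopped_def kprod_def)
        then show ?thesis using elim(2) D by (simp add: mult_le_cancel_left_pos)
      qed
    qed
  qed
next
  show "supermartingale_on M F (TT T) (stopped Te (kprod M \<sigma> S V))"
    using sn unfolding snell_envelope_on_def by blast
next
  fix W t
  assume H: "adapted_on F (TT T) W \<and>
           (\<forall>t\<in>TT T. AE \<omega> in M. \<omega> \<in> Dset M \<sigma> t \<longrightarrow> G t \<omega> \<le> W t \<omega>) \<and>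
           supermartingale_on M F (TT T) (stopped Te (kprod M \<sigma> S W))"
    and t: "t \<in> TT T"
  have Sall: "AE \<omega> in M. \<forall>s\<in>TT T. \<omega> \<in> Dset M \<sigma> s \<longrightarrow> 0 < S s \<omega>"
    by (subst AE_ball_countable[OF countTT]) (use Spos in blast)
  have WGall: "AE \<omega> in M. \<forall>s\<in>TT T. \<omega> \<in> Dset M \<sigma> s \<longrightarrow> G s \<omega> \<le> W s \<omega>"
    by (subst AE_ball_countable[OF countTT]) (use H in blast)
  have domW: "\<forall>t\<in>TT T. AE \<omega> in M. stopped Te (kprod M \<sigma> S G) t \<omega> \<le> stopped Te (kprod M \<sigma> S W) t \<omega>"
  proof
    fix t assume t: "t \<in> TT T"
    show "AE \<omega> in M. stopped Te (kprod M \<sigma> S G) t \<omega> \<le> stopped Te (kprod M \<sigma> S W) t \<omega>"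
      using Sall WGall
    proof eventually_elim
      case (elim \<omega>)
      define s where "s = min t (Te \<omega>)"
      have s: "s \<in> TT T" unfolding s_def using minTT t by blast
      show ?case
      proof (cases "\<omega> \<in> Dset M \<sigma> s")
        case True
        then have "G s \<omega> \<le> W s \<omega>" "0 < S s \<omega>" using elim s by auto
        then show ?thesis using True by (simp add: stopped_def kprod_def s_def[symmetric] mult_left_mono)
      next
        case False then show ?thesis by (simp add: stopped_def kprod_def s_def[symmetric])
      qed
    qed
  qed
  then have le: "AE \<omega> in M. stopped Te (kprod M \<sigma> S V) t \<omega> \<le> stopped Te (kprod M \<sigma> S W) t \<omega>"
    using sn t H unfolding snell_envelope_on_def by blast
  have WGt: "AE \<omega> in M. \<omega> \<in> Dset M \<sigma> t \<longrightarrow> G t \<omega> \<le> W t \<omega>" using H t by blast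
  show "AE \<omega> in M. \<omega> \<in> Dset M \<sigma> t \<longrightarrow> V t \<omega> \<le> W t \<omega>"
    using le Spos[rule_format, OF t] VG[rule_format, OF t] WGt
  proof eventually_elim
    case (elim \<omega>)
    show ?case
    proof
      assume D: "\<omega> \<in> Dset M \<sigma> t"
      show "V t \<omega> \<le> W t \<omega>"
      proof (cases "Te \<omega> \<le> t")
        case True then show ?thesis using elim D by simp
      next
        case False then have "min t (Te \<omega>) = t" by simp
        then have "S t \<omega> * V t \<omega> \<le> S t \<omega> * W t \<omega>" using elim(1) D by (simp add: stopped_def kprod_def)
        then show ?thesis using elim(2) D by (simp add: mult_le_cancel_left_pos)
      qed
    qed
  qed
qed


lemma ii_fwd:
  assumes Spos: "\<forall>t\<in>TT T. AE \<omega> in M. \<omega> \<in> Dset M \<sigma> t \<longrightarrow> 0 < S t \<omega>"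
    and VG: "\<forall>t\<in>TT T. AE \<omega> in M. Te \<omega> \<le> t \<and> \<omega> \<in> Dset M \<sigma> t \<longrightarrow> V t \<omega> = G t \<omega>"
    and GV: "\<forall>t\<in>TT T. AE \<omega> in M. \<omega> \<in> Dset M \<sigma> t \<longrightarrow> G t \<omega> \<le> V t \<omega>"
    and sup: "supermartingale_on M F (TT T) (stopped Te (kprod M \<sigma> S V))"
    and mn: "\<forall>W. adapted_on F (TT T) W \<and>
           (\<forall>t\<in>TT T. AE \<omega> in M. \<omega> \<in> Dset M \<sigma> t \<longrightarrow> G t \<omega> \<le> W t \<omega>) \<and>
           supermartingale_on M F (TT T) (stopped Te (kprod M \<sigma> S W))
         \<longrightarrow> (\<forall>t\<in>TT T. AE \<omega> in M. \<omega> \<in> Dset M \<sigma> t \<longrightarrow> V t \<omega> \<le> W t \<omega>)"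
    and Gad: "adapted_on F (TT T) G" and Vad: "adapted_on F (TT T) V" and Sad: "adapted_on F (TTbar T) S"
  shows "snell_envelope_on M F (TT T) (stopped Te (kprod M \<sigma> S G)) (stopped Te (kprod M \<sigma> S V))"
proof -
  have Sall: "AE \<omega> in M. \<forall>s\<in>TT T. \<omega> \<in> Dset M \<sigma> s \<longrightarrow> 0 < S s \<omega>"
    by (subst AE_ball_countable[OF countTT]) (use Spos in blast)
  have GVall: "AE \<omega> in M. \<forall>s\<in>TT T. \<omega> \<in> Dset M \<sigma> s \<longrightarrow> G s \<omega> \<le> V s \<omega>"
    by (subst AE_ball_countable[OF countTT]) (use GV in blast)
  have VGall: "AE \<omega> in M. \<forall>s\<in>TT T. Te \<omega> \<le> s \<and> \<omega> \<in> Dset M \<sigma> s \<longrightarrow> V s \<omega> = G s \<omega>"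
    by (subst AE_ball_countable[OF countTT]) (use VG in blast)
  have dom: "\<forall>t\<in>TT T. AE \<omega> in M. stopped Te (kprod M \<sigma> S G) t \<omega> \<le> stopped Te (kprod M \<sigma> S V) t \<omega>"
  proof
    fix t assume t: "t \<in> TT T"
    show "AE \<omega> in M. stopped Te (kprod M \<sigma> S G) t \<omega> \<le> stopped Te (kprod M \<sigma> S V) t \<omega>"
      using Sall GVall
    proof eventually_elim
      case (elim \<omega>)
      define s where "s = min t (Te \<omega>)"
      have s: "s \<in> TT T" unfolding s_def using minTT t by blast
      show ?case
      proof (cases "\<omega> \<in> Dset M \<sigma> s")
        case True
        then have "G s \<omega> \<le> V s \<omega>" "0 < S s \<omega>" using elim s by auto
        then show ?thesis using True by (simp add: stopped_def kprod_def s_def[symmetric] mult_left_mono)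
      next
        case False then show ?thesis by (simp add: stopped_def kprod_def s_def[symmetric])
      qed
    qed
  qed
  have minimal: "\<forall>t\<in>TT T. AE \<omega> in M. stopped Te (kprod M \<sigma> S V) t \<omega> \<le> Z t \<omega>"
    if Z: "supermartingale_on M F (TT T) Z \<and>
        (\<forall>t\<in>TT T. AE \<omega> in M. stopped Te (kprod M \<sigma> S G) t \<omega> \<le> Z t \<omega>)" for Z
  proof -
    have Zsup: "supermartingale_on M F (TT T) Z" and Zdom: "\<forall>t\<in>TT T. AE \<omega> in M. stopped Te (kprod M \<sigma> S G) t \<omega> \<le> Z t \<omega>"
      using Z by auto
    define W where "W = (\<lambda>t \<omega>. if \<omega> \<in> Dset M \<sigma> t \<and> t < Te \<omega> \<and> 0 < S t \<omega>
        then min (V t \<omega>) (max (G t \<omega>) (Z t \<omega> / S t \<omega>)) else V t \<omega>)"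
    have Wt: "W t \<in> borel_measurable (F t)" if t: "t \<in> TT T" for t
    proof -
      have tT: "t \<in> TTbar T" using t TT_sub by blast
      have [measurable]: "S t \<in> borel_measurable (F t)" using Sad tT by (rule ad_meas)
      have [measurable]: "V t \<in> borel_measurable (F t)" using Vad t by (rule ad_meas)
      have [measurable]: "G t \<in> borel_measurable (F t)" using Gad t by (rule ad_meas)
      have [measurable]: "Z t \<in> borel_measurable (F t)" using Zsup t by (rule sup_meas)
      have [measurable]: "Dset M \<sigma> t \<in> sets (F t)" using tT by (rule D_sets)
      have [measurable]: "Measurable.pred (F t) (\<lambda>\<omega>. t < Te \<omega>)"
        unfolding pred_def using Te_sets[OF t] space_F[OF tT] by simp
      show ?thesis unfolding W_def by measurable
    qed
    have Wad: "adapted_on F (TT T) W" unfolding adapted_on_def using Wt by blast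
    have WG: "\<forall>t\<in>TT T. AE \<omega> in M. \<omega> \<in> Dset M \<sigma> t \<longrightarrow> G t \<omega> \<le> W t \<omega>"
    proof
      fix t assume t: "t \<in> TT T"
      show "AE \<omega> in M. \<omega> \<in> Dset M \<sigma> t \<longrightarrow> G t \<omega> \<le> W t \<omega>"
        using GV[rule_format, OF t] by eventually_elim (auto simp: W_def)
    qed
    have stopW_eq: "stopped Te (kprod M \<sigma> S W) t \<omega> =
        (if t < Te \<omega> then kprod M \<sigma> S W t \<omega> else stopped Te (kprod M \<sigma> S V) t \<omega>)" for t \<omega>
    proof (cases "t < Te \<omega>")
      case True then have "min t (Te \<omega>) = t" by simp
      then show ?thesis using True by (simp add: stopped_def)
    next
      case False
      then have m: "min t (Te \<omega>) = Te \<omega>" by simp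
      have "W (Te \<omega>) \<omega> = V (Te \<omega>) \<omega>" by (simp add: W_def)
      then show ?thesis using False m by (simp add: stopped_def kprod_def)
    qed
    have SWad: "adapted_on F (TT T) (stopped Te (kprod M \<sigma> S W))"
      unfolding adapted_on_def
    proof
      fix t assume t: "t \<in> TT T"
      have tT: "t \<in> TTbar T" using t TT_sub by blast
      have [measurable]: "S t \<in> borel_measurable (F t)" using Sad tT by (rule ad_meas)
      have [measurable]: "W t \<in> borel_measurable (F t)" using Wt t by blast
      have [measurable]: "stopped Te (kprod M \<sigma> S V) t \<in> borel_measurable (F t)"
        using sup t by (rule sup_meas)
      have [measurable]: "Dset M \<sigma> t \<in> sets (F t)" using tT by (rule D_sets)
      have [measurable]: "Measurable.pred (F t) (\<lambda>\<omega>. t < Te \<omega>)"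
        unfolding pred_def using Te_sets[OF t] space_F[OF tT] by simp
      have [measurable]: "kprod M \<sigma> S W t \<in> borel_measurable (F t)"
        unfolding kprod_def by measurable
      have "(\<lambda>\<omega>. if t < Te \<omega> then kprod M \<sigma> S W t \<omega> else stopped Te (kprod M \<sigma> S V) t \<omega>) \<in> borel_measurable (F t)"
        by (rule measurable_If) (use Te_sets[OF t] space_F[OF tT] in auto)
      then show "stopped Te (kprod M \<sigma> S W) t \<in> borel_measurable (F t)"
        by (subst stopW_eq[abs_def]) simp
    qed
    have eqU: "AE \<omega> in M. stopped Te (kprod M \<sigma> S W) t \<omega> = min (stopped Te (kprod M \<sigma> S V) t \<omega>) (Z t \<omega>)"
      if t: "t \<in> TT T" for t
      using Sall VGall Zdom[rule_format, OF t]
    proof eventually_elim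
      case (elim \<omega>)
      show ?case
      proof (cases "t < Te \<omega>")
        case True
        then have m: "min t (Te \<omega>) = t" by simp
        show ?thesis
        proof (cases "\<omega> \<in> Dset M \<sigma> t")
          case D: True
          then have Sp: "0 < S t \<omega>" using elim t by auto
          have Zg: "S t \<omega> * G t \<omega> \<le> Z t \<omega>" using elim(3) m D by (simp add: stopped_def kprod_def)
          have "stopped Te (kprod M \<sigma> S W) t \<omega> = S t \<omega> * min (V t \<omega>) (max (G t \<omega>) (Z t \<omega> / S t \<omega>))"
            using True D Sp by (subst stopW_eq) (simp add: kprod_def W_def)
          also have "\<dots> = min (S t \<omega> * V t \<omega>) (max (S t \<omega> * G t \<omega>) (Z t \<omega>))"
            using Sp by (rule arith_minmax)
          also have "\<dots> = min (stopped Te (kprod M \<sigma> S V) t \<omega>) (Z t \<omega>)"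
            using Zg m D by (simp add: stopped_def kprod_def max_def)
          finally show ?thesis .
        next
          case False
          have "0 \<le> Z t \<omega>" using elim(3) m False by (simp add: stopped_def kprod_def)
          then show ?thesis using True False m by (simp add: stopW_eq stopped_def kprod_def)
        qed
      next
        case False
        then have m: "min t (Te \<omega>) = Te \<omega>" by simp
        have s: "Te \<omega> \<in> TT T" using minTT[OF t, of "Te \<omega>"] m by simp
        have "kprod M \<sigma> S V (Te \<omega>) \<omega> = kprod M \<sigma> S G (Te \<omega>) \<omega>"
          using elim(2) s by (auto simp: kprod_def)
        then have "stopped Te (kprod M \<sigma> S V) t \<omega> \<le> Z t \<omega>"
          using elim(3) m by (simp add: stopped_def)
        then show ?thesis using False by (simp add: stopW_eq)
      qed
    qed
    have SWsup: "supermartingale_on M F (TT T) (stopped Te (kprod M \<sigma> S W))"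
      by (rule min_super[OF TT_sub sup Zsup SWad eqU])
    have VW: "\<forall>t\<in>TT T. AE \<omega> in M. \<omega> \<in> Dset M \<sigma> t \<longrightarrow> V t \<omega> \<le> W t \<omega>"
      using mn Wad WG SWsup by blast
    show ?thesis
    proof
      fix t assume t: "t \<in> TT T"
      show "AE \<omega> in M. stopped Te (kprod M \<sigma> S V) t \<omega> \<le> Z t \<omega>"
        using Sall VGall Zdom[rule_format, OF t] VW[rule_format, OF t]
      proof eventually_elim
        case (elim \<omega>)
        show ?case
        proof (cases "t < Te \<omega>")
          case True
          then have m: "min t (Te \<omega>) = t" by simp
          show ?thesis
          proof (cases "\<omega> \<in> Dset M \<sigma> t")
            case D: True
            then have Sp: "0 < S t \<omega>" using elim t by auto
            have Zg: "S t \<omega> * G t \<omega> \<le> Z t \<omega>" using elim(3) m D by (simp add: stopped_def kprod_def)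
            have "V t \<omega> \<le> min (V t \<omega>) (max (G t \<omega>) (Z t \<omega> / S t \<omega>))"
              using elim(4) D True Sp by (simp add: W_def)
            then have "V t \<omega> \<le> max (G t \<omega>) (Z t \<omega> / S t \<omega>)" by simp
            then have "S t \<omega> * V t \<omega> \<le> max (S t \<omega> * G t \<omega>) (Z t \<omega>)" using Sp by (rule arith_le[rotated])
            then show ?thesis using Zg m D by (simp add: stopped_def kprod_def max_def split: if_splits)
          next
            case False
            then show ?thesis using elim(3) m by (simp add: stopped_def kprod_def)
          qed
        next
          case False
          then have m: "min t (Te \<omega>) = Te \<omega>" by simp
          have s: "Te \<omega> \<in> TT T" using minTT[OF t, of "Te \<omega>"] m by simp
          have "kprod M \<sigma> S V (Te \<omega>) \<omega> = kprod M \<sigma> S G (Te \<omega>) \<omega>"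
            using elim(2) s by (auto simp: kprod_def)
          then show "stopped Te (kprod M \<sigma> S V) t \<omega> \<le> Z t \<omega>"
            using elim(3) m by (simp add: stopped_def)
        qed
      qed
    qed
  qed
  show ?thesis unfolding snell_envelope_on_def using sup dom minimal by blast
qed


abbreviation X3 :: "(enat \<Rightarrow> 'a \<Rightarrow> real) \<Rightarrow> (enat \<Rightarrow> 'a \<Rightarrow> real) \<Rightarrow> enat \<Rightarrow> 'a \<Rightarrow> real" where
  "X3 V G \<equiv> (\<lambda>t \<omega>. indicator {\<omega> \<in> Dset M \<sigma> t. t \<noteq> \<infinity> \<and> V t \<omega> = G t \<omega>} \<omega>
              + indicator {\<omega> \<in> space M. t = \<infinity> \<and> \<sigma> \<omega> = \<infinity>} \<omega>)"

lemma X3_nonneg: "0 \<le> X3 V G t \<omega>"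
  by (simp add: indicator_def)

lemma X3_le_R: "\<omega> \<in> space M \<Longrightarrow> X3 V G t \<omega> \<le> indicator (Dset M \<sigma> t) \<omega>"
  by (auto simp: indicator_def Dset_def)

lemma X3_inf: "\<omega> \<in> space M \<Longrightarrow> X3 V G \<infinity> \<omega> = indicator (Dset M \<sigma> \<infinity>) \<omega>"
  by (auto simp: indicator_def Dset_def)

lemma X3_fin: "t \<noteq> \<infinity> \<Longrightarrow> X3 V G t \<omega> = indicator {\<omega> \<in> Dset M \<sigma> t. V t \<omega> = G t \<omega>} \<omega>"
  by (auto simp: indicator_def)

lemma TTbar_cases: "t \<in> TTbar T \<Longrightarrow> (t = \<infinity> \<Longrightarrow> T = \<infinity> \<Longrightarrow> P) \<Longrightarrow> (t \<in> TT T \<Longrightarrow> t \<noteq> \<infinity> \<Longrightarrow> P) \<Longrightarrow> P"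
  unfolding TT_def TTbar_def by (cases "t = \<infinity>") auto

lemma iii_bwd:
  assumes sn: "snell_envelope_on M F (TTbar T) (X3 V G) S"
  shows "(\<forall>t\<in>TTbar T. AE \<omega> in M. 0 \<le> S t \<omega> \<and> S t \<omega> \<le> indicator (Dset M \<sigma> t) \<omega>) \<and>
      (\<forall>t\<in>TTbar T. AE \<omega> in M. 0 \<le> S t \<omega>) \<and>
      supermartingale_on M F (TTbar T) S \<and>
      (\<forall>t\<in>TT T. AE \<omega> in M. \<omega> \<in> Dset M \<sigma> t \<and> V t \<omega> = G t \<omega> \<longrightarrow> S t \<omega> = 1) \<and>
      (T = \<infinity> \<longrightarrow> (AE \<omega> in M. S \<infinity> \<omega> = indicator (Dset M \<sigma> \<infinity>) \<omega>)) \<and>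
      (\<forall>Z. (\<forall>t\<in>TTbar T. AE \<omega> in M. 0 \<le> Z t \<omega>) \<and>
           supermartingale_on M F (TTbar T) Z \<and>
           (\<forall>t\<in>TT T. AE \<omega> in M. \<omega> \<in> Dset M \<sigma> t \<and> V t \<omega> = G t \<omega> \<longrightarrow> Z t \<omega> = 1) \<and>
           (T = \<infinity> \<longrightarrow> (AE \<omega> in M. Z \<infinity> \<omega> = indicator (Dset M \<sigma> \<infinity>) \<omega>))
         \<longrightarrow> (\<forall>t\<in>TTbar T. AE \<omega> in M. S t \<omega> \<le> Z t \<omega>))"
proof -
  have sup: "supermartingale_on M F (TTbar T) S" using sn unfolding snell_envelope_on_def by blast
  have dom: "\<forall>t\<in>TTbar T. AE \<omega> in M. X3 V G t \<omega> \<le> S t \<omega>" using sn unfolding snell_envelope_on_def by blast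
  have mn: "\<And>Z. supermartingale_on M F (TTbar T) Z \<Longrightarrow> (\<forall>t\<in>TTbar T. AE \<omega> in M. X3 V G t \<omega> \<le> Z t \<omega>)
      \<Longrightarrow> (\<forall>t\<in>TTbar T. AE \<omega> in M. S t \<omega> \<le> Z t \<omega>)"
    using sn unfolding snell_envelope_on_def by blast
  define U where "U = (\<lambda>t \<omega>. min (S t \<omega>) (indicator (Dset M \<sigma> t) \<omega> :: real))"
  have Uad: "adapted_on F (TTbar T) U"
    unfolding adapted_on_def U_def
  proof
    fix t assume t: "t \<in> TTbar T"
    have [measurable]: "S t \<in> borel_measurable (F t)" using sup t by (rule sup_meas)
    have [measurable]: "Dset M \<sigma> t \<in> sets (F t)" using t by (rule D_sets)
    show "(\<lambda>\<omega>. min (S t \<omega>) (indicator (Dset M \<sigma> t) \<omega> :: real)) \<in> borel_measurable (F t)" by measurable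
  qed
  have Usup: "supermartingale_on M F (TTbar T) U"
    by (rule min_super[OF order_refl sup R_super Uad]) (simp add: U_def)
  have Udom: "\<forall>t\<in>TTbar T. AE \<omega> in M. X3 V G t \<omega> \<le> U t \<omega>"
  proof
    fix t assume t: "t \<in> TTbar T"
    show "AE \<omega> in M. X3 V G t \<omega> \<le> U t \<omega>"
      using dom[rule_format, OF t] AE_space
    proof eventually_elim
      case (elim \<omega>) then show ?case using X3_le_R[where V=V and G=G and t=t and \<omega>=\<omega>] by (simp add: U_def)
    qed
  qed
  have SU: "\<forall>t\<in>TTbar T. AE \<omega> in M. S t \<omega> \<le> U t \<omega>" using mn[OF Usup Udom] .
  have R: "\<forall>t\<in>TTbar T. AE \<omega> in M. 0 \<le> S t \<omega> \<and> S t \<omega> \<le> indicator (Dset M \<sigma> t) \<omega>"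
  proof
    fix t assume t: "t \<in> TTbar T"
    show "AE \<omega> in M. 0 \<le> S t \<omega> \<and> S t \<omega> \<le> indicator (Dset M \<sigma> t) \<omega>"
      using dom[rule_format, OF t] SU[rule_format, OF t]
    proof eventually_elim
      case (elim \<omega>)
      have "0 \<le> X3 V G t \<omega>" by (rule X3_nonneg)
      then have "0 \<le> S t \<omega>" using elim(1) by linarith
      then show ?case using elim(2) by (simp add: U_def)
    qed
  qed
  have one: "\<forall>t\<in>TT T. AE \<omega> in M. \<omega> \<in> Dset M \<sigma> t \<and> V t \<omega> = G t \<omega> \<longrightarrow> S t \<omega> = 1"
  proof
    fix t assume t: "t \<in> TT T"
    then have tT: "t \<in> TTbar T" and tf: "t \<noteq> \<infinity>" using TT_sub by (auto simp: TT_def)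
    show "AE \<omega> in M. \<omega> \<in> Dset M \<sigma> t \<and> V t \<omega> = G t \<omega> \<longrightarrow> S t \<omega> = 1"
      using dom[rule_format, OF tT] R[rule_format, OF tT]
    proof eventually_elim
      case (elim \<omega>) then show ?case using X3_fin[OF tf, where V=V and G=G and \<omega>=\<omega>] by (auto simp: indicator_def)
    qed
  qed
  have inf: "T = \<infinity> \<longrightarrow> (AE \<omega> in M. S \<infinity> \<omega> = indicator (Dset M \<sigma> \<infinity>) \<omega>)"
  proof
    assume T: "T = \<infinity>"
    then have iT: "\<infinity> \<in> TTbar T" by (simp add: TTbar_def)
    show "AE \<omega> in M. S \<infinity> \<omega> = indicator (Dset M \<sigma> \<infinity>) \<omega>"
      using dom[rule_format, OF iT] R[rule_format, OF iT] AE_space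
    proof eventually_elim
      case (elim \<omega>) then show ?case using X3_inf[where V=V and G=G and \<omega>=\<omega>] by simp
    qed
  qed
  have minZ: "\<forall>t\<in>TTbar T. AE \<omega> in M. S t \<omega> \<le> Z t \<omega>"
    if Z: "(\<forall>t\<in>TTbar T. AE \<omega> in M. 0 \<le> Z t \<omega>) \<and>
           supermartingale_on M F (TTbar T) Z \<and>
           (\<forall>t\<in>TT T. AE \<omega> in M. \<omega> \<in> Dset M \<sigma> t \<and> V t \<omega> = G t \<omega> \<longrightarrow> Z t \<omega> = 1) \<and>
           (T = \<infinity> \<longrightarrow> (AE \<omega> in M. Z \<infinity> \<omega> = indicator (Dset M \<sigma> \<infinity>) \<omega>))" for Z
  proof (rule mn)
    show "supermartingale_on M F (TTbar T) Z" using Z by blast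
    show "\<forall>t\<in>TTbar T. AE \<omega> in M. X3 V G t \<omega> \<le> Z t \<omega>"
    proof
      fix t assume t: "t \<in> TTbar T"
      show "AE \<omega> in M. X3 V G t \<omega> \<le> Z t \<omega>"
      proof (rule TTbar_cases[OF t])
        assume ti: "t = \<infinity>" and T: "T = \<infinity>"
        have "AE \<omega> in M. Z \<infinity> \<omega> = indicator (Dset M \<sigma> \<infinity>) \<omega>" using Z T by blast
        then show ?thesis using AE_space
        proof eventually_elim
          case (elim \<omega>) then show ?case using X3_inf[where V=V and G=G and \<omega>=\<omega>] ti by simp
        qed
      next
        assume tt: "t \<in> TT T" and tf: "t \<noteq> \<infinity>"
        have "AE \<omega> in M. 0 \<le> Z t \<omega>" using Z t by blast
        moreover have "AE \<omega> in M. \<omega> \<in> Dset M \<sigma> t \<and> V t \<omega> = G t \<omega> \<longrightarrow> Z t \<omega> = 1" using Z tt by blast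
        ultimately show ?thesis
        proof eventually_elim
          case (elim \<omega>) then show ?case using X3_fin[OF tf, where V=V and G=G and \<omega>=\<omega>] by (auto simp: indicator_def)
        qed
      qed
    qed
  qed
  have nn: "\<forall>t\<in>TTbar T. AE \<omega> in M. 0 \<le> S t \<omega>"
  proof
    fix t assume "t \<in> TTbar T"
    then show "AE \<omega> in M. 0 \<le> S t \<omega>" using R by (auto elim: AE_mp)
  qed
  show ?thesis using R nn sup one inf minZ by blast
qed

lemma iii_fwd:
  assumes nn: "\<forall>t\<in>TTbar T. AE \<omega> in M. 0 \<le> S t \<omega>"
    and sup: "supermartingale_on M F (TTbar T) S"
    and one: "\<forall>t\<in>TT T. AE \<omega> in M. \<omega> \<in> Dset M \<sigma> t \<and> V t \<omega> = G t \<omega> \<longrightarrow> S t \<omega> = 1"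
    and inf: "T = \<infinity> \<longrightarrow> (AE \<omega> in M. S \<infinity> \<omega> = indicator (Dset M \<sigma> \<infinity>) \<omega>)"
    and mn: "\<forall>Z. (\<forall>t\<in>TTbar T. AE \<omega> in M. 0 \<le> Z t \<omega>) \<and>
           supermartingale_on M F (TTbar T) Z \<and>
           (\<forall>t\<in>TT T. AE \<omega> in M. \<omega> \<in> Dset M \<sigma> t \<and> V t \<omega> = G t \<omega> \<longrightarrow> Z t \<omega> = 1) \<and>
           (T = \<infinity> \<longrightarrow> (AE \<omega> in M. Z \<infinity> \<omega> = indicator (Dset M \<sigma> \<infinity>) \<omega>))
         \<longrightarrow> (\<forall>t\<in>TTbar T. AE \<omega> in M. S t \<omega> \<le> Z t \<omega>)"
  shows "snell_envelope_on M F (TTbar T) (X3 V G) S"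
proof -
  have dom: "\<forall>t\<in>TTbar T. AE \<omega> in M. X3 V G t \<omega> \<le> S t \<omega>"
  proof
    fix t assume t: "t \<in> TTbar T"
    show "AE \<omega> in M. X3 V G t \<omega> \<le> S t \<omega>"
    proof (rule TTbar_cases[OF t])
      assume ti: "t = \<infinity>" and T: "T = \<infinity>"
      have "AE \<omega> in M. S \<infinity> \<omega> = indicator (Dset M \<sigma> \<infinity>) \<omega>" using inf T by blast
      then show ?thesis using AE_space
      proof eventually_elim
        case (elim \<omega>) then show ?case using X3_inf[where V=V and G=G and \<omega>=\<omega>] ti by simp
      qed
    next
      assume tt: "t \<in> TT T" and tf: "t \<noteq> \<infinity>"
      have "AE \<omega> in M. 0 \<le> S t \<omega>" using nn t by blast
      moreover have "AE \<omega> in M. \<omega> \<in> Dset M \<sigma> t \<and> V t \<omega> = G t \<omega> \<longrightarrow> S t \<omega> = 1" using one tt by blast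
      ultimately show ?thesis
      proof eventually_elim
        case (elim \<omega>) then show ?case using X3_fin[OF tf, where V=V and G=G and \<omega>=\<omega>] by (auto simp: indicator_def)
      qed
    qed
  qed
  have minimal: "\<forall>t\<in>TTbar T. AE \<omega> in M. S t \<omega> \<le> Z t \<omega>"
    if Zsup: "supermartingale_on M F (TTbar T) Z" and Zdom: "\<forall>t\<in>TTbar T. AE \<omega> in M. X3 V G t \<omega> \<le> Z t \<omega>" for Z
  proof -
    define U where "U = (\<lambda>t \<omega>. min (Z t \<omega>) (S t \<omega>))"
    have Uad: "adapted_on F (TTbar T) U"
      unfolding adapted_on_def U_def
    proof
      fix t assume t: "t \<in> TTbar T"
      have [measurable]: "S t \<in> borel_measurable (F t)" using sup t by (rule sup_meas)
      have [measurable]: "Z t \<in> borel_measurable (F t)" using Zsup t by (rule sup_meas)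
      show "(\<lambda>\<omega>. min (Z t \<omega>) (S t \<omega>)) \<in> borel_measurable (F t)" by measurable
    qed
    have Usup: "supermartingale_on M F (TTbar T) U"
      by (rule min_super[OF order_refl Zsup sup Uad]) (simp add: U_def)
    have Unn: "\<forall>t\<in>TTbar T. AE \<omega> in M. 0 \<le> U t \<omega>"
    proof
      fix t assume t: "t \<in> TTbar T"
      show "AE \<omega> in M. 0 \<le> U t \<omega>" using Zdom[rule_format, OF t] nn[rule_format, OF t]
      proof eventually_elim
        case (elim \<omega>)
      have "0 \<le> X3 V G t \<omega>" by (rule X3_nonneg)
      then have "0 \<le> Z t \<omega>" using elim(1) by linarith
      then show ?case using elim(2) by (simp add: U_def)
      qed
    qed
    have Uone: "\<forall>t\<in>TT T. AE \<omega> in M. \<omega> \<in> Dset M \<sigma> t \<and> V t \<omega> = G t \<omega> \<longrightarrow> U t \<omega> = 1"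
    proof
      fix t assume tt: "t \<in> TT T"
      then have t: "t \<in> TTbar T" and tf: "t \<noteq> \<infinity>" using TT_sub by (auto simp: TT_def)
      show "AE \<omega> in M. \<omega> \<in> Dset M \<sigma> t \<and> V t \<omega> = G t \<omega> \<longrightarrow> U t \<omega> = 1"
        using Zdom[rule_format, OF t] one[rule_format, OF tt]
      proof eventually_elim
        case (elim \<omega>) then show ?case using X3_fin[OF tf, where V=V and G=G and \<omega>=\<omega>] by (auto simp: U_def indicator_def)
      qed
    qed
    have Uinf: "T = \<infinity> \<longrightarrow> (AE \<omega> in M. U \<infinity> \<omega> = indicator (Dset M \<sigma> \<infinity>) \<omega>)"
    proof
      assume T: "T = \<infinity>"
      then have iT: "\<infinity> \<in> TTbar T" by (simp add: TTbar_def)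
      have "AE \<omega> in M. S \<infinity> \<omega> = indicator (Dset M \<sigma> \<infinity>) \<omega>" using inf T by blast
      then show "AE \<omega> in M. U \<infinity> \<omega> = indicator (Dset M \<sigma> \<infinity>) \<omega>"
        using Zdom[rule_format, OF iT] AE_space
      proof eventually_elim
        case (elim \<omega>) then show ?case using X3_inf[where V=V and G=G and \<omega>=\<omega>] by (simp add: U_def)
      qed
    qed
    have SU: "\<forall>t\<in>TTbar T. AE \<omega> in M. S t \<omega> \<le> U t \<omega>" using mn Unn Usup Uone Uinf by blast
    show ?thesis
    proof
      fix t assume t: "t \<in> TTbar T"
      show "AE \<omega> in M. S t \<omega> \<le> Z t \<omega>" using SU[rule_format, OF t]
        by eventually_elim (simp add: U_def)
    qed
  qed
  show ?thesis unfolding snell_envelope_on_def using sup dom minimal by blast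
qed

end

theorem lemma6p3:
  fixes M :: "'a measure" and F :: "enat \<Rightarrow> 'a measure" and T :: enat
    and \<sigma> :: "'a \<Rightarrow> enat" and G V S :: "enat \<Rightarrow> 'a \<Rightarrow> real"
  assumes prob: "prob_space M"
    and filt: "filtration_on M F (TTbar T)"
    and F0: "sets (F 0) = {{}, space M}"
    and sigma_meas: "\<sigma> \<in> measurable M (count_space UNIV)"
    and sigma_stop: "\<forall>t\<in>TTbar T. {\<omega> \<in> space M. \<sigma> \<omega> \<le> t} \<in> sets (F t)"
    and sigma_pos: "AE \<omega> in M. 0 < \<sigma> \<omega>"
    and G_adapted: "adapted_on F (TT T) G"
    and G_inf: "T = \<infinity> \<longrightarrow> (AE \<omega> in M. \<omega> \<in> Dset M \<sigma> \<infinity> \<longrightarrow>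
                   ereal (G \<infinity> \<omega>) = limsup (\<lambda>n. ereal (G (enat n) \<omega>)))"
    and G_int: "(\<integral>\<^sup>+ \<omega>. (SUP t\<in>TTbar T. ennreal (\<bar>G t \<omega>\<bar> * indicator (Dset M \<sigma> t) \<omega>)) \<partial>M) < \<infinity>"
    and V_adapted: "adapted_on F (TT T) V"
    and S_adapted: "adapted_on F (TTbar T) S"
  shows
   "( \<comment> \<open>(i)\<close>
      (\<forall>t\<in>TT T. AE \<omega> in M. (\<omega> \<in> Dset M \<sigma> t \<longrightarrow> 0 < S t \<omega> \<and> S t \<omega> \<le> 1) \<and>
                           (\<omega> \<notin> Dset M \<sigma> t \<longrightarrow> S t \<omega> = 0)) \<and>
      (\<forall>t\<in>TT T. AE \<omega> in M. eff_horizon M F \<sigma> T \<omega> \<le> t \<and> \<omega> \<in> Dset M \<sigma> t \<longrightarrow> V t \<omega> = G t \<omega>) \<and>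
      \<comment> \<open>(ii)\<close>
      (\<forall>t\<in>TT T. AE \<omega> in M. \<omega> \<in> Dset M \<sigma> t \<longrightarrow> G t \<omega> \<le> V t \<omega>) \<and>
      supermartingale_on M F (TT T) (stopped (eff_horizon M F \<sigma> T) (kprod M \<sigma> S V)) \<and>
      (\<forall>W. adapted_on F (TT T) W \<and>
           (\<forall>t\<in>TT T. AE \<omega> in M. \<omega> \<in> Dset M \<sigma> t \<longrightarrow> G t \<omega> \<le> W t \<omega>) \<and>
           supermartingale_on M F (TT T) (stopped (eff_horizon M F \<sigma> T) (kprod M \<sigma> S W))
         \<longrightarrow> (\<forall>t\<in>TT T. AE \<omega> in M. \<omega> \<in> Dset M \<sigma> t \<longrightarrow> V t \<omega> \<le> W t \<omega>)) \<and>
      \<comment> \<open>(iii)\<close>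
      (\<forall>t\<in>TTbar T. AE \<omega> in M. 0 \<le> S t \<omega>) \<and>
      supermartingale_on M F (TTbar T) S \<and>
      (\<forall>t\<in>TT T. AE \<omega> in M. \<omega> \<in> Dset M \<sigma> t \<and> V t \<omega> = G t \<omega> \<longrightarrow> S t \<omega> = 1) \<and>
      (T = \<infinity> \<longrightarrow> (AE \<omega> in M. S \<infinity> \<omega> = indicator (Dset M \<sigma> \<infinity>) \<omega>)) \<and>
      (\<forall>Z. (\<forall>t\<in>TTbar T. AE \<omega> in M. 0 \<le> Z t \<omega>) \<and>
           supermartingale_on M F (TTbar T) Z \<and>
           (\<forall>t\<in>TT T. AE \<omega> in M. \<omega> \<in> Dset M \<sigma> t \<and> V t \<omega> = G t \<omega> \<longrightarrow> Z t \<omega> = 1) \<and>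
           (T = \<infinity> \<longrightarrow> (AE \<omega> in M. Z \<infinity> \<omega> = indicator (Dset M \<sigma> \<infinity>) \<omega>))
         \<longrightarrow> (\<forall>t\<in>TTbar T. AE \<omega> in M. S t \<omega> \<le> Z t \<omega>)))
    \<longleftrightarrow>
    ( \<comment> \<open>(i')\<close>
      (\<forall>t\<in>TT T. AE \<omega> in M. \<omega> \<in> Dset M \<sigma> t \<longrightarrow> 0 < S t \<omega>) \<and>
      (\<forall>t\<in>TT T. AE \<omega> in M. eff_horizon M F \<sigma> T \<omega> \<le> t \<and> \<omega> \<in> Dset M \<sigma> t \<longrightarrow> V t \<omega> = G t \<omega>) \<and>
      \<comment> \<open>(ii')\<close>
      snell_envelope_on M F (TT T)
        (stopped (eff_horizon M F \<sigma> T) (kprod M \<sigma> S G))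
        (stopped (eff_horizon M F \<sigma> T) (kprod M \<sigma> S V)) \<and>
      \<comment> \<open>(iii')\<close>
      snell_envelope_on M F (TTbar T)
        (\<lambda>t \<omega>. indicator {\<omega> \<in> Dset M \<sigma> t. t \<noteq> \<infinity> \<and> V t \<omega> = G t \<omega>} \<omega>
              + indicator {\<omega> \<in> space M. t = \<infinity> \<and> \<sigma> \<omega> = \<infinity>} \<omega>)
        S)"
proof -
  interpret L6 M F T \<sigma> using prob filt sigma_stop by (simp add: L6_def)
  show ?thesis
    apply (rule iffI)
     apply (elim conjE)
    subgoal premises p
    proof -
      have Spos: "\<forall>t\<in>TT T. AE \<omega> in M. \<omega> \<in> Dset M \<sigma> t \<longrightarrow> 0 < S t \<omega>"
      proof
        fix t assume t: "t \<in> TT T"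
        show "AE \<omega> in M. \<omega> \<in> Dset M \<sigma> t \<longrightarrow> 0 < S t \<omega>"
          using p(1)[rule_format, OF t] by eventually_elim blast
      qed
      have A: "snell_envelope_on M F (TT T)
        (stopped (eff_horizon M F \<sigma> T) (kprod M \<sigma> S G))
        (stopped (eff_horizon M F \<sigma> T) (kprod M \<sigma> S V))"
        by (rule ii_fwd[OF Spos p(2) p(3) p(4) p(5) G_adapted V_adapted S_adapted])
      have B: "snell_envelope_on M F (TTbar T)
        (\<lambda>t \<omega>. indicator {\<omega> \<in> Dset M \<sigma> t. t \<noteq> \<infinity> \<and> V t \<omega> = G t \<omega>} \<omega>
              + indicator {\<omega> \<in> space M. t = \<infinity> \<and> \<sigma> \<omega> = \<infinity>} \<omega>)
        S"
        by (rule iii_fwd[OF p(6) p(7) p(8) p(9) p(10)])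
      show ?thesis using Spos p(2) A B by blast
    qed
    apply (elim conjE)
    subgoal premises q
    proof -
      note II = ii_bwd[OF q(1) q(2) q(3)]
      note III = iii_bwd[OF q(4)]
      have R: "\<forall>t\<in>TTbar T. AE \<omega> in M. 0 \<le> S t \<omega> \<and> S t \<omega> \<le> indicator (Dset M \<sigma> t) \<omega>"
        using III by blast
      have I1: "\<forall>t\<in>TT T. AE \<omega> in M. (\<omega> \<in> Dset M \<sigma> t \<longrightarrow> 0 < S t \<omega> \<and> S t \<omega> \<le> 1) \<and>
                           (\<omega> \<notin> Dset M \<sigma> t \<longrightarrow> S t \<omega> = 0)"
      proof
        fix t assume t: "t \<in> TT T"
        then have tT: "t \<in> TTbar T" using TT_sub by blast
        show "AE \<omega> in M. (\<omega> \<in> Dset M \<sigma> t \<longrightarrow> 0 < S t \<omega> \<and> S t \<omega> \<le> 1) \<and>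
                           (\<omega> \<notin> Dset M \<sigma> t \<longrightarrow> S t \<omega> = 0)"
          using q(1)[rule_format, OF t] R[rule_format, OF tT]
        proof eventually_elim
          case (elim \<omega>) then show ?case by (auto simp: indicator_def split: if_splits)
        qed
      qed
      show ?thesis using I1 q(2) II III by blast
    qed
    done
qed

end
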